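(* For every sufficiently small fixed $\varepsilon>0$ and $p=n^{-(2/5+\varepsilon)}$, asymptotically almost surely $G\sim\mathbb{G}(n,p)$ does not contain pairwise edge-disjoint $K_4$-tiled subgraphs $H_1,\dots,H_k$ with $k\ge 2$ and $|V(H_i)\cap V(H_{i+1})|=1$ for every $i\in[k-1]$, such that $\phi(H_1)\ge 6$, $\phi(H_k)\ge 6$, and $\phi(H_i)\ge 3$ for every $2\le i\le k-1$, where $\phi(H)=8-5v(H)+2e(H)$.
   Context: A graph is $K_4$-tiled if every edge lies in a copy of $K_4$ and the auxiliary graph whose vertices are the copies of $K_4$ (two adjacent iff they share an edge) is connected. *)

theory Defs
  imports Complex_Main
begin

text \<open>Graphs on vertex set {0..<n} are represented by their edge sets: sets of
2-element subsets of {0..<n}.\<close>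

definition all_edges :: "nat \<Rightarrow> nat set set" where
  "all_edges n = {e. \<exists>u v. u < n \<and> v < n \<and> u \<noteq> v \<and> e = {u, v}}"

definition gnp_prob :: "nat \<Rightarrow> real \<Rightarrow> (nat set set \<Rightarrow> bool) \<Rightarrow> real" where
  "gnp_prob n p P =
     (\<Sum>E\<in>Pow (all_edges n).
        if P E then p ^ card E * (1 - p) ^ (card (all_edges n) - card E) else 0)"

definition verts :: "nat set set \<Rightarrow> nat set" where
  "verts H = \<Union> H"

definition K4_copies :: "nat set set \<Rightarrow> nat set set" where
  "K4_copies H = {S. card S = 4 \<and> (\<forall>u\<in>S. \<forall>v\<in>S. u \<noteq> v \<longrightarrow> {u, v} \<in> H)}"

definition K4_aux :: "nat set set \<Rightarrow> (nat set \<times> nat set) set" where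
  "K4_aux H = {(S, T). S \<in> K4_copies H \<and> T \<in> K4_copies H \<and>
                       (\<exists>e\<in>H. e \<subseteq> S \<and> e \<subseteq> T)}"

definition K4_tiled :: "nat set set \<Rightarrow> bool" where
  "K4_tiled H \<longleftrightarrow>
     K4_copies H \<noteq> {} \<and>
     (\<forall>e\<in>H. \<exists>S\<in>K4_copies H. e \<subseteq> S) \<and>
     (\<forall>S\<in>K4_copies H. \<forall>T\<in>K4_copies H. (S, T) \<in> (K4_aux H)\<^sup>*)"

definition phi :: "nat set set \<Rightarrow> int" where
  "phi H = 8 - 5 * int (card (verts H)) + 2 * int (card H)"

definition bad_chain :: "nat set set \<Rightarrow> bool" where
  "bad_chain E \<longleftrightarrow>
     (\<exists>k::nat. \<exists>Hs :: nat \<Rightarrow> nat set set. k \<ge> 2 \<and>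
        (\<forall>i\<in>{1..k}. Hs i \<subseteq> E \<and> K4_tiled (Hs i)) \<and>
        (\<forall>i\<in>{1..k}. \<forall>j\<in>{1..k}. i \<noteq> j \<longrightarrow> Hs i \<inter> Hs j = {}) \<and>
        (\<forall>i\<in>{1..k-1}. card (verts (Hs i) \<inter> verts (Hs (Suc i))) = 1) \<and>
        phi (Hs 1) \<ge> 6 \<and> phi (Hs k) \<ge> 6 \<and>
        (\<forall>i\<in>{2..k-1}. phi (Hs i) \<ge> 3))"

end

theory Submission
  imports Defs
begin


definition kedges :: "nat set \<Rightarrow> nat set set" where
  "kedges S = {e. \<exists>u\<in>S. \<exists>v\<in>S. u \<noteq> v \<and> e = {u, v}}"

lemma card4_split:
  assumes "card S = 4" "a \<in> S" "b \<in> S" "a \<noteq> b"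
  shows "\<exists>c d. S = {a,b,c,d} \<and> c \<noteq> d \<and> c \<noteq> a \<and> c \<noteq> b \<and> d \<noteq> a \<and> d \<noteq> b"
proof -
  have fin: "finite S" using assms(1) by (metis card.infinite zero_neq_numeral)
  have "card (S - {a,b}) = 2" using assms fin by (simp add: card_Diff_subset)
  then obtain c d where cd: "S - {a,b} = {c,d}" "c \<noteq> d" by (auto simp: card_2_iff)
  hence "S = {a,b,c,d}" using assms by blast
  with cd show ?thesis by blast
qed

lemma card4_obtain:
  assumes "card S = 4"
  shows "\<exists>a b c d. S = {a,b,c,d} \<and> a \<noteq> b \<and> c \<noteq> d \<and> c \<noteq> a \<and> c \<noteq> b \<and> d \<noteq> a \<and> d \<noteq> b"
proof -
  have "card S \<ge> 2" using assms by simp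
  then obtain a b where "a \<in> S" "b \<in> S" "a \<noteq> b"
    by (metis card_2_iff' obtain_subset_with_card_n subset_iff)
  with card4_split[OF assms] show ?thesis by metis
qed

lemma kedges_explicit:
  "kedges {a,b,c,d} = {{a,b},{a,c},{a,d},{b,c},{b,d},{c,d}} \<or> \<not> (a \<noteq> b \<and> c \<noteq> d \<and> c \<noteq> a \<and> c \<noteq> b \<and> d \<noteq> a \<and> d \<noteq> b)"
  unfolding kedges_def by (auto simp: insert_commute)

lemma kedges_card:
  assumes "card S = 4" shows "card (kedges S) = 6"
proof -
  obtain a b c d where S: "S = {a,b,c,d}" and D: "a \<noteq> b" "c \<noteq> d" "c \<noteq> a" "c \<noteq> b" "d \<noteq> a" "d \<noteq> b"
    using card4_obtain[OF assms] by blast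
  have "kedges S = {{a,b},{a,c},{a,d},{b,c},{b,d},{c,d}}"
    using kedges_explicit[of a b c d] D S by auto
  thus ?thesis using D by (simp add: doubleton_eq_iff)
qed

lemma verts_kedges:
  assumes "card S = 4" shows "verts (kedges S) = S"
proof -
  obtain a b c d where S: "S = {a,b,c,d}" and D: "a \<noteq> b" "c \<noteq> d" "c \<noteq> a" "c \<noteq> b" "d \<noteq> a" "d \<noteq> b"
    using card4_obtain[OF assms] by blast
  have "kedges S = {{a,b},{a,c},{a,d},{b,c},{b,d},{c,d}}"
    using kedges_explicit[of a b c d] D S by auto
  thus ?thesis using S unfolding verts_def by auto
qed

lemma kedges_sub: "S \<in> K4_copies H \<Longrightarrow> kedges S \<subseteq> H"
  unfolding kedges_def K4_copies_def by auto

lemma all_edges_finite: "finite (all_edges n)"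
proof -
  have "all_edges n \<subseteq> Pow {0..<n}" unfolding all_edges_def by auto
  thus ?thesis by (rule finite_subset) simp
qed

lemma verts_le2:
  assumes "F \<subseteq> all_edges n" shows "card (verts F) \<le> 2 * card F"
proof -
  have "card (verts F) \<le> sum card F" unfolding verts_def by (rule card_Union_le_sum_card)
  also have "\<dots> \<le> sum (\<lambda>_. 2) F"
    by (rule sum_mono) (use assms in \<open>auto simp: all_edges_def\<close>)
  finally show ?thesis by simp
qed

lemma verts_finite:
  assumes "F \<subseteq> all_edges n" shows "finite (verts F)"
proof -
  have "verts F \<subseteq> {0..<n}" using assms unfolding verts_def all_edges_def by auto
  thus ?thesis by (rule finite_subset) simp
qed

lemma path_lemma:
  assumes "(X0, Y0) \<in> R\<^sup>*" "P X0" "\<not> P Y0"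
  shows "\<exists>X Y. (X, Y) \<in> R \<and> P X \<and> \<not> P Y"
  using assms by (induction rule: rtrancl_induct) auto

lemma add_new:
  assumes "finite F'" "F \<subseteq> F'" "N \<subseteq> F'" "N \<inter> F = {}"
  shows "card F + card N \<le> card F'"
proof -
  have "finite F" "finite N" using assms by (auto intro: finite_subset)
  hence "card (F \<union> N) = card F + card N" using assms(4) by (simp add: card_Un_disjoint Int_commute)
  moreover have "card (F \<union> N) \<le> card F'" using assms by (intro card_mono) auto
  ultimately show ?thesis by simp
qed

lemma count_step:
  assumes finF': "finite F'" and sub: "F \<subseteq> F'" "kedges {a,b,c,d} \<subseteq> F'"
    and D: "c \<noteq> d" "c \<noteq> a" "c \<noteq> b" "d \<noteq> a" "d \<noteq> b" "a \<noteq> b"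
    and vF': "verts F' = verts F \<union> {c,d}" and finV: "finite (verts F)"
    and inv: "5 * card (verts F) \<le> 2 * card F + 8"
  shows "5 * card (verts F') \<le> 2 * card F' + 8"
proof -
  have cle: "card F \<le> card F'" using finF' sub by (simp add: card_mono)
  consider (both) "c \<in> verts F" "d \<in> verts F" | (c) "c \<notin> verts F" "d \<in> verts F"
    | (d) "c \<in> verts F" "d \<notin> verts F" | (none) "c \<notin> verts F" "d \<notin> verts F" by blast
  then show ?thesis
  proof cases
    case both
    hence "verts F' = verts F" using vF' by blast
    thus ?thesis using inv cle by simp
  next
    case c
    hence cv: "card (verts F') = card (verts F) + 1" using vF' finV by (simp add: insert_absorb)
    have Nsub: "{{c,a},{c,b},{c,d}} \<subseteq> kedges {a,b,c,d}" unfolding kedges_def using D by blast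
    have Nd: "{{c,a},{c,b},{c,d}} \<inter> F = {}" using c(1) unfolding verts_def by blast
    have Nc: "card {{c,a},{c,b},{c,d}} = 3" using D by (simp add: doubleton_eq_iff)
    have "card F + card {{c,a},{c,b},{c,d}} \<le> card F'"
      by (rule add_new[OF finF' sub(1) _ Nd]) (use Nsub sub(2) in blast)
    thus ?thesis using inv cv Nc by simp
  next
    case d
    hence cv: "card (verts F') = card (verts F) + 1" using vF' finV by (simp add: insert_absorb)
    have Nsub: "{{d,a},{d,b},{d,c}} \<subseteq> kedges {a,b,c,d}" unfolding kedges_def using D by blast
    have Nd: "{{d,a},{d,b},{d,c}} \<inter> F = {}" using d(2) unfolding verts_def by blast
    have Nc: "card {{d,a},{d,b},{d,c}} = 3" using D by (simp add: doubleton_eq_iff)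
    have "card F + card {{d,a},{d,b},{d,c}} \<le> card F'"
      by (rule add_new[OF finF' sub(1) _ Nd]) (use Nsub sub(2) in blast)
    thus ?thesis using inv cv Nc by simp
  next
    case none
    hence cv: "card (verts F') = card (verts F) + 2" using vF' finV D by simp
    have Nsub: "{{c,a},{c,b},{c,d},{d,a},{d,b}} \<subseteq> kedges {a,b,c,d}" unfolding kedges_def using D by blast
    have Nd: "{{c,a},{c,b},{c,d},{d,a},{d,b}} \<inter> F = {}" using none unfolding verts_def by blast
    have Nc: "card {{c,a},{c,b},{c,d},{d,a},{d,b}} = 5" using D by (simp add: doubleton_eq_iff)
    have "card F + card {{c,a},{c,b},{c,d},{d,a},{d,b}} \<le> card F'"
      by (rule add_new[OF finF' sub(1) _ Nd]) (use Nsub sub(2) in blast)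
    thus ?thesis using inv cv Nc by simp
  qed
qed
lemma grow_step:
  assumes FH: "F \<subseteq> H" and He: "H \<subseteq> all_edges n" and tiled: "K4_tiled H"
    and T0: "T0 \<in> K4_copies H" "kedges T0 \<subseteq> F" and ne: "F \<noteq> H"
    and inv: "5 * card (verts F) \<le> 2 * card F + 8"
  shows "\<exists>F'. F \<subset> F' \<and> F' \<subseteq> H \<and> card F' \<le> card F + 6 \<and> 5 * card (verts F') \<le> 2 * card F' + 8"
proof -
  have finH: "finite H" using He all_edges_finite finite_subset by blast
  obtain h where h: "h \<in> H" "h \<notin> F" using FH ne by blast
  obtain S0 where S0: "S0 \<in> K4_copies H" "h \<subseteq> S0" using tiled h unfolding K4_tiled_def by blast
  obtain u v where uv: "u \<noteq> v" "h = {u,v}" using h He unfolding all_edges_def by blast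
  have "h \<in> kedges S0" using S0 uv unfolding kedges_def by auto
  hence nS0: "\<not> kedges S0 \<subseteq> F" using h by blast
  have "(T0, S0) \<in> (K4_aux H)\<^sup>*" using tiled T0 S0 unfolding K4_tiled_def by blast
  from path_lemma[OF this, of "\<lambda>X. kedges X \<subseteq> F"] T0 nS0
  obtain X Y where XY: "(X, Y) \<in> K4_aux H" "kedges X \<subseteq> F" "\<not> kedges Y \<subseteq> F" by blast
  from XY(1) obtain e where e: "X \<in> K4_copies H" "Y \<in> K4_copies H" "e \<in> H" "e \<subseteq> X" "e \<subseteq> Y"
    unfolding K4_aux_def by blast
  obtain a b where ab: "a \<noteq> b" "e = {a,b}" using e He unfolding all_edges_def by blast
  have "e \<in> kedges X" using e ab unfolding kedges_def by auto
  hence "e \<in> F" using XY(2) by blast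
  hence abV: "a \<in> verts F" "b \<in> verts F" using ab unfolding verts_def by blast+
  have cY: "card Y = 4" using e unfolding K4_copies_def by simp
  have abY: "a \<in> Y" "b \<in> Y" using e ab by auto
  from card4_split[OF cY abY ab(1)]
  obtain c d where Y: "Y = {a,b,c,d}" and D: "c \<noteq> d" "c \<noteq> a" "c \<noteq> b" "d \<noteq> a" "d \<noteq> b"
    by blast
  define F' where "F' = F \<union> kedges Y"
  have F'H: "F' \<subseteq> H" using FH kedges_sub[OF e(2)] unfolding F'_def by blast
  have finF': "finite F'" using F'H finH finite_subset by blast
  have finF: "finite F" using FH finH finite_subset by blast
  have psub: "F \<subset> F'" using XY(3) unfolding F'_def by blast
  have "card F' \<le> card F + card (kedges Y)" unfolding F'_def by (rule card_Un_le)
  hence c6: "card F' \<le> card F + 6" using kedges_card[OF cY] by simp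
  have "verts F' = verts F \<union> verts (kedges Y)" unfolding F'_def verts_def by simp
  also have "\<dots> = verts F \<union> {a,b,c,d}" using verts_kedges[OF cY] Y by simp
  also have "\<dots> = verts F \<union> {c,d}" using abV by blast
  finally have vF': "verts F' = verts F \<union> {c,d}" .
  have finV: "finite (verts F)" using verts_finite FH He by blast
  have sub: "F \<subseteq> F'" "kedges Y \<subseteq> F'" unfolding F'_def by auto
  have "5 * card (verts F') \<le> 2 * card F' + 8"
    by (rule count_step[OF finF' sub(1) _ D ab(1) vF' finV inv]) (use sub(2) Y in simp)
  thus ?thesis using psub F'H c6 by blast
qed


lemma grow:
  assumes He: "H \<subseteq> all_edges n" and tiled: "K4_tiled H"
  shows "\<exists>F\<subseteq>H. 5 * card (verts F) \<le> 2 * card F + 8 \<and> (m \<le> card F \<or> F = H) \<and> card F \<le> m + 6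
           \<and> (\<exists>T0\<in>K4_copies H. kedges T0 \<subseteq> F)"
proof (induction m)
  case 0
  obtain S0 where S0: "S0 \<in> K4_copies H" using tiled unfolding K4_tiled_def by blast
  have c4: "card S0 = 4" using S0 unfolding K4_copies_def by simp
  show ?case
    apply (rule exI[of _ "kedges S0"])
    using kedges_sub[OF S0] kedges_card[OF c4] verts_kedges[OF c4] S0 c4 by auto
next
  case (Suc m)
  then obtain F T0 where F: "F \<subseteq> H" "5 * card (verts F) \<le> 2 * card F + 8" "m \<le> card F \<or> F = H"
      "card F \<le> m + 6" and T0: "T0 \<in> K4_copies H" "kedges T0 \<subseteq> F" by blast
  show ?case
  proof (cases "Suc m \<le> card F \<or> F = H")
    case True thus ?thesis using F T0 by (intro exI[of _ F]) auto
  next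
    case False
    hence cF: "card F = m" "F \<noteq> H" using F(3) by auto
    from grow_step[OF F(1) He tiled T0 cF(2) F(2)] obtain F' where F': "F \<subset> F'" "F' \<subseteq> H"
      "card F' \<le> card F + 6" "5 * card (verts F') \<le> 2 * card F' + 8" by blast
    have finH: "finite H" using He all_edges_finite finite_subset by blast
    have "card F < card F'" using F' finH psubset_card_mono finite_subset by blast
    hence a1: "Suc m \<le> card F'" using cF by simp
    have a2: "card F' \<le> Suc m + 6" using F'(3) cF by simp
    have a3: "kedges T0 \<subseteq> F'" using T0 F'(1) by blast
    show ?thesis apply (rule exI[of _ F']) using a1 a2 a3 F'(2,4) T0(1) by blast
  qed
qed

lemma six_le:
  assumes He: "H \<subseteq> all_edges n" and tiled: "K4_tiled H"
  shows "6 \<le> card H"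
proof -
  obtain S0 where S0: "S0 \<in> K4_copies H" using tiled unfolding K4_tiled_def by blast
  have c4: "card S0 = 4" using S0 unfolding K4_copies_def by simp
  have finH: "finite H" using He all_edges_finite finite_subset by blast
  have "card (kedges S0) \<le> card H" using kedges_sub[OF S0] finH by (rule card_mono[rotated])
  thus ?thesis using kedges_card[OF c4] by simp
qed



lemma chain_ind:
  assumes k2: "k \<ge> 2"
    and HE: "\<forall>i\<in>{1..k}. Hs i \<subseteq> E \<and> K4_tiled (Hs i)"
    and disj: "\<forall>i\<in>{1..k}. \<forall>j\<in>{1..k}. i \<noteq> j \<longrightarrow> Hs i \<inter> Hs j = {}"
    and one: "\<forall>i\<in>{1..k-1}. card (verts (Hs i) \<inter> verts (Hs (Suc i))) = 1"
    and p1: "phi (Hs 1) \<ge> 6" and pk: "phi (Hs k) \<ge> 6"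
    and pm: "\<forall>i\<in>{2..k-1}. phi (Hs i) \<ge> 3"
    and EA: "E \<subseteq> all_edges n"
    and small: "\<forall>i\<in>{1..k}. card (Hs i) \<le> T"
  shows "1 \<le> j \<Longrightarrow> j \<le> k \<Longrightarrow>
     (\<Union>i\<in>{1..j}. Hs i) \<subseteq> E \<and> 6 * j \<le> card (\<Union>i\<in>{1..j}. Hs i) \<and> card (\<Union>i\<in>{1..j}. Hs i) \<le> j * T
     \<and> (j < k \<longrightarrow> 2 * int (card (\<Union>i\<in>{1..j}. Hs i)) - 5 * int (card (verts (\<Union>i\<in>{1..j}. Hs i))) \<ge> -2)
     \<and> (j = k \<longrightarrow> 2 * int (card (\<Union>i\<in>{1..j}. Hs i)) - 5 * int (card (verts (\<Union>i\<in>{1..j}. Hs i))) \<ge> 1)"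
proof (induction j)
  case 0 thus ?case by simp
next
  case (Suc j)
  have sub: "\<And>i. i \<in> {1..k} \<Longrightarrow> Hs i \<subseteq> all_edges n" using HE EA by blast
  have fin: "\<And>i. i \<in> {1..k} \<Longrightarrow> finite (Hs i)" using sub all_edges_finite finite_subset by blast
  have phidef: "\<And>i. phi (Hs i) = 8 - 5 * int (card (verts (Hs i))) + 2 * int (card (Hs i))"
    unfolding phi_def by simp
  show ?case
  proof (cases "j = 0")
    case True
    hence U: "(\<Union>i\<in>{1..Suc j}. Hs i) = Hs 1" by simp
    have "1 \<in> {1..k}" using k2 by simp
    thus ?thesis unfolding U using HE six_le[OF sub] small p1 phidef[of 1] k2 True by auto
  next
    case False
    let ?U = "\<Union>i\<in>{1..j}. Hs i"
    let ?H = "Hs (Suc j)"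
    have IH: "?U \<subseteq> E" "6 * j \<le> card ?U" "card ?U \<le> j * T"
      "2 * int (card ?U) - 5 * int (card (verts ?U)) \<ge> -2"
      using Suc False by auto
    have sj: "Suc j \<in> {1..k}" using Suc by simp
    have iS: "{1..Suc j} = insert (Suc j) {1..j}" by auto
    have U: "(\<Union>i\<in>{1..Suc j}. Hs i) = ?U \<union> ?H"
      unfolding iS UN_insert by (rule sup_commute)
    have finU: "finite ?U" using fin Suc by auto
    have finH: "finite ?H" using fin sj by blast
    have dis: "?U \<inter> ?H = {}"
    proof -
      { fix i assume i: "i \<in> {1..j}"
        hence "i \<in> {1..k}" "i \<noteq> Suc j" using Suc.prems by auto
        hence "Hs i \<inter> ?H = {}" using disj sj by blast }
      thus ?thesis by blast
    qed
    have cU: "card (?U \<union> ?H) = card ?U + card ?H" using card_Un_disjoint[OF finU finH dis] .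
    have vU: "verts (?U \<union> ?H) = verts ?U \<union> verts ?H" unfolding verts_def by simp
    have finvU: "finite (verts ?U)" using verts_finite IH(1) EA by blast
    have finvH: "finite (verts ?H)" using verts_finite sub[OF sj] by blast
    have "j \<in> {1..k-1}" using Suc False by auto
    hence c1: "card (verts (Hs j) \<inter> verts ?H) = 1" using one by blast
    have "j \<in> {1..j}" using False by simp
    hence "Hs j \<subseteq> ?U" by blast
    hence "verts (Hs j) \<subseteq> verts ?U" unfolding verts_def by blast
    hence "verts (Hs j) \<inter> verts ?H \<subseteq> verts ?U \<inter> verts ?H" by blast
    hence "1 \<le> card (verts ?U \<inter> verts ?H)" using c1 finvU
      by (metis card_mono finite_Int)
    moreover have "card (verts ?U \<union> verts ?H) + card (verts ?U \<inter> verts ?H) = card (verts ?U) + card (verts ?H)"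
      using card_Un_Int[OF finvU finvH] by simp
    ultimately have vle: "int (card (verts (?U \<union> ?H))) \<le> int (card (verts ?U)) + int (card (verts ?H)) - 1"
      unfolding vU by linarith
    have six: "6 \<le> card ?H" using six_le[OF sub[OF sj]] HE sj by blast
    have HT: "card ?H \<le> T" using small sj by blast
    have HE': "?H \<subseteq> E" using HE sj by blast
    have ph: "phi ?H \<ge> 3" 
    proof (cases "Suc j = k")
      case True thus ?thesis using pk by simp
    next
      case False
      hence "Suc j \<in> {2..k-1}" using Suc \<open>j \<noteq> 0\<close> by auto
      thus ?thesis using pm by blast
    qed
    have D: "2 * int (card (?U \<union> ?H)) - 5 * int (card (verts (?U \<union> ?H))) \<ge>
        2 * int (card ?U) - 5 * int (card (verts ?U)) + phi ?H - 3"
      using cU vle phidef[of "Suc j"] by simp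
    show ?thesis unfolding U
    proof (intro conjI impI)
      show "?U \<union> ?H \<subseteq> E" using IH HE' by blast
      show "6 * Suc j \<le> card (?U \<union> ?H)" using cU IH six by simp
      show "card (?U \<union> ?H) \<le> Suc j * T" using cU IH HT by simp
      show "2 * int (card (?U \<union> ?H)) - 5 * int (card (verts (?U \<union> ?H))) \<ge> -2" if "Suc j < k"
        using D IH ph by linarith
      show "2 * int (card (?U \<union> ?H)) - 5 * int (card (verts (?U \<union> ?H))) \<ge> 1" if "Suc j = k"
        using D IH pk that by simp
    qed
  qed
qed


lemma chain_witness:
  assumes bc: "bad_chain E" and EA: "E \<subseteq> all_edges n" and J1: "1 \<le> J"
  shows "\<exists>F\<subseteq>E. (T \<le> card F \<and> card F \<le> T + 6 \<and> 5 * card (verts F) \<le> 2 * card F + 8)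
     \<or> (card F \<le> J * T \<and> 5 * card (verts F) + 1 \<le> 2 * card F)
     \<or> (6 * J \<le> card F \<and> card F \<le> J * T \<and> 5 * card (verts F) \<le> 2 * card F + 2)"
proof -
  obtain k Hs where k2: "k \<ge> 2"
    and HE: "\<forall>i\<in>{1..k}. Hs i \<subseteq> E \<and> K4_tiled (Hs i)"
    and disj: "\<forall>i\<in>{1..k}. \<forall>j\<in>{1..k}. i \<noteq> j \<longrightarrow> Hs i \<inter> Hs j = {}"
    and one: "\<forall>i\<in>{1..k-1}. card (verts (Hs i) \<inter> verts (Hs (Suc i))) = 1"
    and p1: "phi (Hs 1) \<ge> 6" and pk: "phi (Hs k) \<ge> 6"
    and pm: "\<forall>i\<in>{2..k-1}. phi (Hs i) \<ge> 3"
    using bc unfolding bad_chain_def by blast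
  show ?thesis
  proof (cases "\<exists>i\<in>{1..k}. T \<le> card (Hs i)")
    case True
    then obtain i where i: "i \<in> {1..k}" "T \<le> card (Hs i)" by blast
    have sub: "Hs i \<subseteq> all_edges n" "Hs i \<subseteq> E" using HE EA i by blast+
    have tl: "K4_tiled (Hs i)" using HE i by blast
    from grow[OF sub(1) tl, of T] obtain F where F: "F \<subseteq> Hs i" "5 * card (verts F) \<le> 2 * card F + 8"
      "T \<le> card F \<or> F = Hs i" "card F \<le> T + 6" by blast
    have "T \<le> card F" using F(3) i by auto
    thus ?thesis using F sub by blast
  next
    case False
    hence small: "\<forall>i\<in>{1..k}. card (Hs i) \<le> T" by auto
    note ci = chain_ind[OF k2 HE disj one p1 pk pm EA small]
    show ?thesis
    proof (cases "k \<le> J")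
      case True
      have "1 \<le> k" using k2 by simp
      from ci[OF this order.refl] have
        A: "(\<Union>i\<in>{1..k}. Hs i) \<subseteq> E" "card (\<Union>i\<in>{1..k}. Hs i) \<le> k * T"
        "2 * int (card (\<Union>i\<in>{1..k}. Hs i)) - 5 * int (card (verts (\<Union>i\<in>{1..k}. Hs i))) \<ge> 1" by auto
      have "k * T \<le> J * T" using True by simp
      hence "card (\<Union>i\<in>{1..k}. Hs i) \<le> J * T \<and> 5 * card (verts (\<Union>i\<in>{1..k}. Hs i)) + 1 \<le> 2 * card (\<Union>i\<in>{1..k}. Hs i)"
        using A(2,3) by linarith
      thus ?thesis using A(1) by blast
    next
      case False
      from ci[OF J1] False have
        A: "(\<Union>i\<in>{1..J}. Hs i) \<subseteq> E" "6 * J \<le> card (\<Union>i\<in>{1..J}. Hs i)" "card (\<Union>i\<in>{1..J}. Hs i) \<le> J * T"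
        "2 * int (card (\<Union>i\<in>{1..J}. Hs i)) - 5 * int (card (verts (\<Union>i\<in>{1..J}. Hs i))) \<ge> -2" by auto
      hence "6 * J \<le> card (\<Union>i\<in>{1..J}. Hs i) \<and> card (\<Union>i\<in>{1..J}. Hs i) \<le> J * T \<and> 5 * card (verts (\<Union>i\<in>{1..J}. Hs i)) \<le> 2 * card (\<Union>i\<in>{1..J}. Hs i) + 2"
        by linarith
      thus ?thesis using A(1) by blast
    qed
  qed
qed

lemma dense_witness:
  assumes bc: "bad_chain E" and EA: "E \<subseteq> all_edges n" and eps: "(\<epsilon>::real) > 0"
  shows "\<exists>F\<subseteq>E. card (verts F) \<le> 2 * (nat \<lceil>1/\<epsilon>\<rceil> * nat \<lceil>2/\<epsilon>\<rceil> + nat \<lceil>2/\<epsilon>\<rceil> + 6)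
      \<and> 5 * real (card (verts F)) + 1 \<le> (2 + 5 * \<epsilon>) * real (card F)"
proof -
  define T where "T = nat \<lceil>2/\<epsilon>\<rceil>"
  define J where "J = nat \<lceil>1/\<epsilon>\<rceil>"
  have "0 < 1/\<epsilon>" using eps by simp
  hence c1: "1 \<le> \<lceil>1/\<epsilon>\<rceil>" by simp
  have J1: "1 \<le> J" using nat_mono[OF c1] unfolding J_def by simp
  have eT: "\<epsilon> * real T \<ge> 2"
  proof -
    have "real T \<ge> 2/\<epsilon>" unfolding T_def by linarith
    thus ?thesis using eps by (simp add: field_simps)
  qed
  have eJ: "\<epsilon> * real J \<ge> 1"
  proof -
    have "real J \<ge> 1/\<epsilon>" unfolding J_def by linarith
    thus ?thesis using eps by (simp add: field_simps)
  qed
  from chain_witness[OF bc EA J1, of T] obtain F where F: "F \<subseteq> E" and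
    C: "(T \<le> card F \<and> card F \<le> T + 6 \<and> 5 * card (verts F) \<le> 2 * card F + 8)
     \<or> (card F \<le> J * T \<and> 5 * card (verts F) + 1 \<le> 2 * card F)
     \<or> (6 * J \<le> card F \<and> card F \<le> J * T \<and> 5 * card (verts F) \<le> 2 * card F + 2)" by blast
  have v2: "card (verts F) \<le> 2 * card F" using verts_le2 F EA by blast
  have M: "card (verts F) \<le> 2 * (J * T + T + 6)" using C v2 by auto
  have "5 * real (card (verts F)) + 1 \<le> (2 + 5 * \<epsilon>) * real (card F)"
    using C
  proof (elim disjE conjE)
    assume a: "T \<le> card F" "5 * card (verts F) \<le> 2 * card F + 8"
    have "\<epsilon> * real T \<le> \<epsilon> * real (card F)" using a eps by simp
    moreover have "5 * real (card (verts F)) \<le> 2 * real (card F) + 8" using a by linarith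
    ultimately show ?thesis using eT by (simp add: algebra_simps)
  next
    assume a: "5 * card (verts F) + 1 \<le> 2 * card F"
    have "0 \<le> \<epsilon> * real (card F)" using eps by simp
    moreover have "5 * real (card (verts F)) + 1 \<le> 2 * real (card F)" using a by linarith
    ultimately show ?thesis by (simp add: algebra_simps)
  next
    assume a: "6 * J \<le> card F" "5 * card (verts F) \<le> 2 * card F + 2"
    have "real (6 * J) \<le> real (card F)" using a(1) by (simp only: of_nat_le_iff)
    hence "6 * real J \<le> real (card F)" by simp
    hence "\<epsilon> * (6 * real J) \<le> \<epsilon> * real (card F)" using eps
      by (intro mult_left_mono) simp_all
    moreover have "5 * real (card (verts F)) \<le> 2 * real (card F) + 2" using a by linarith
    ultimately show ?thesis using eJ by (simp add: algebra_simps)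
  qed
  thus ?thesis using F M unfolding T_def J_def by blast
qed



lemma gnp_nonneg:
  assumes "0 \<le> p" "p \<le> 1" shows "0 \<le> gnp_prob n p P"
  unfolding gnp_prob_def using assms by (intro sum_nonneg) auto

lemma gnp_union:
  assumes p: "0 \<le> p" "p \<le> 1" and W: "W \<subseteq> Pow (all_edges n)"
    and imp: "\<forall>E\<in>Pow (all_edges n). P E \<longrightarrow> (\<exists>F\<in>W. F \<subseteq> E)"
  shows "gnp_prob n p P \<le> (\<Sum>F\<in>W. gnp_prob n p (\<lambda>E. F \<subseteq> E))"
proof -
  let ?A = "all_edges n"
  let ?w = "\<lambda>E. p ^ card E * (1 - p) ^ (card ?A - card E)"
  have finA: "finite (Pow ?A)" using all_edges_finite by simp
  have finW: "finite W" using W finA finite_subset by blast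
  have wnn: "\<And>E. 0 \<le> ?w E" using p by simp
  have "gnp_prob n p P = (\<Sum>E\<in>Pow ?A. if P E then ?w E else 0)" unfolding gnp_prob_def by simp
  also have "\<dots> \<le> (\<Sum>E\<in>Pow ?A. \<Sum>F\<in>W. if F \<subseteq> E then ?w E else 0)"
  proof (rule sum_mono)
    fix E assume E: "E \<in> Pow ?A"
    show "(if P E then ?w E else 0) \<le> (\<Sum>F\<in>W. if F \<subseteq> E then ?w E else 0)"
    proof (cases "P E")
      case True
      then obtain F where F: "F \<in> W" "F \<subseteq> E" using imp E by blast
      have "(if F \<subseteq> E then ?w E else 0) \<le> (\<Sum>F\<in>W. if F \<subseteq> E then ?w E else 0)"
        by (rule member_le_sum[OF F(1) _ finW]) (use wnn in auto)
      thus ?thesis using F True by simp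
    next
      case False
      have "0 \<le> (\<Sum>F\<in>W. if F \<subseteq> E then ?w E else 0)" by (rule sum_nonneg) (use wnn in auto)
      thus ?thesis using False by simp
    qed
  qed
  also have "\<dots> = (\<Sum>F\<in>W. \<Sum>E\<in>Pow ?A. if F \<subseteq> E then ?w E else 0)" by (rule sum.swap)
  also have "\<dots> = (\<Sum>F\<in>W. gnp_prob n p (\<lambda>E. F \<subseteq> E))" unfolding gnp_prob_def by simp
  finally show ?thesis .
qed

lemma gnp_sub:
  assumes F: "F \<subseteq> all_edges n"
  shows "gnp_prob n p (\<lambda>E. F \<subseteq> E) = p ^ card F"
proof -
  let ?A = "all_edges n"
  let ?B = "?A - F"
  let ?w = "\<lambda>E. p ^ card E * (1 - p) ^ (card ?A - card E)"
  have finA: "finite ?A" using all_edges_finite by simp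
  have finB: "finite ?B" using finA by simp
  have finF: "finite F" using F finA finite_subset by blast
  have cB: "card ?B = card ?A - card F" using F finF by (simp add: card_Diff_subset)
  have cFA: "card F \<le> card ?A" using F finA card_mono by blast
  have "gnp_prob n p (\<lambda>E. F \<subseteq> E) = (\<Sum>E\<in>{E\<in>Pow ?A. F \<subseteq> E}. ?w E)"
    unfolding gnp_prob_def by (rule sum.inter_filter[symmetric]) (simp add: finA)
  also have "{E\<in>Pow ?A. F \<subseteq> E} = (\<lambda>G. F \<union> G) ` Pow ?B"
  proof (rule set_eqI, rule iffI)
    fix E assume "E \<in> {E\<in>Pow ?A. F \<subseteq> E}"
    hence "E = F \<union> (E - F)" "E - F \<in> Pow ?B" by auto
    thus "E \<in> (\<lambda>G. F \<union> G) ` Pow ?B" by blast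
  next
    fix E assume "E \<in> (\<lambda>G. F \<union> G) ` Pow ?B"
    thus "E \<in> {E\<in>Pow ?A. F \<subseteq> E}" using F by auto
  qed
  also have "(\<Sum>E\<in>(\<lambda>G. F \<union> G) ` Pow ?B. ?w E) = (\<Sum>G\<in>Pow ?B. ?w (F \<union> G))"
  proof (rule sum.reindex[unfolded comp_def])
    show "inj_on (\<lambda>G. F \<union> G) (Pow ?B)" by (rule inj_onI) blast
  qed
  also have "\<dots> = (\<Sum>G\<in>Pow ?B. p ^ card F * (p ^ card G * (1 - p) ^ (card ?B - card G)))"
  proof (rule sum.cong[OF refl])
    fix G assume G: "G \<in> Pow ?B"
    have finG: "finite G" using G finB finite_subset by blast
    have cU: "card (F \<union> G) = card F + card G" using G finF finG by (intro card_Un_disjoint) auto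
    have "card G \<le> card ?B" using G finB card_mono by blast
    hence "card ?A - card (F \<union> G) = card ?B - card G" using cU cB cFA by simp
    thus "?w (F \<union> G) = p ^ card F * (p ^ card G * (1 - p) ^ (card ?B - card G))"
      using cU by (simp add: power_add)
  qed
  also have "\<dots> = p ^ card F * (\<Sum>G\<in>Pow ?B. p ^ card G * (1 - p) ^ (card ?B - card G))"
    by (simp add: sum_distrib_left)
  also have "(\<Sum>G\<in>Pow ?B. p ^ card G * (1 - p) ^ (card ?B - card G)) = (\<Prod>a\<in>?B. p + (1 - p))"
  proof -
    have "(\<Prod>a\<in>?B. p + (1 - p)) = (\<Sum>G\<in>Pow ?B. (\<Prod>a\<in>G. p) * (\<Prod>a\<in>?B - G. 1 - p))"
      by (rule prod_add[OF finB])
    also have "\<dots> = (\<Sum>G\<in>Pow ?B. p ^ card G * (1 - p) ^ (card ?B - card G))"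
    proof (rule sum.cong[OF refl])
      fix G assume G: "G \<in> Pow ?B"
      have "finite G" using G finB finite_subset by blast
      hence "card (?B - G) = card ?B - card G" using G by (simp add: card_Diff_subset)
      thus "(\<Prod>a\<in>G. p) * (\<Prod>a\<in>?B - G. 1 - p) = p ^ card G * (1 - p) ^ (card ?B - card G)" by simp
    qed
    finally show ?thesis by simp
  qed
  also have "(\<Prod>a\<in>?B. p + (1 - p)) = 1" by simp
  finally show ?thesis by simp
qed



lemma count_bound:
  assumes n1: "n \<ge> 1" and W: "W \<subseteq> {F. F \<subseteq> all_edges n \<and> card (verts F) \<le> M}"
  shows "(\<Sum>F\<in>W. inverse (real n ^ card (verts F))) \<le> 2 ^ (2 ^ M) * (real M + 1)"
proof -
  let ?g = "\<lambda>V. inverse (real n ^ card V)"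
  define VV where "VV = {V. V \<subseteq> {0..<n} \<and> card V \<le> M}"
  have finVV: "finite VV" unfolding VV_def by (rule finite_subset[of _ "Pow {0..<n}"]) auto
  have finW: "finite W"
    by (rule finite_subset[of _ "Pow (all_edges n)"]) (use W all_edges_finite in auto)
  have gnn: "\<And>V. 0 \<le> ?g V" by simp
  have s1: "(\<Sum>F\<in>W. ?g (verts F)) = (\<Sum>V\<in>verts ` W. \<Sum>F\<in>{F\<in>W. verts F = V}. ?g (verts F))"
    by (rule sum.image_gen[OF finW])
  have s2: "(\<Sum>V\<in>verts ` W. \<Sum>F\<in>{F\<in>W. verts F = V}. ?g (verts F)) \<le> (\<Sum>V\<in>verts ` W. 2 ^ (2 ^ M) * ?g V)"
  proof (rule sum_mono)
    fix V assume V: "V \<in> verts ` W"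
    then obtain F0 where F0: "F0 \<in> W" "V = verts F0" by blast
    have finV: "finite V" using F0 W verts_finite by blast
    have cV: "card V \<le> M" using F0 W by blast
    have "(\<Sum>F\<in>{F\<in>W. verts F = V}. ?g (verts F)) = (\<Sum>F\<in>{F\<in>W. verts F = V}. ?g V)"
      by (rule sum.cong) auto
    also have "\<dots> = real (card {F\<in>W. verts F = V}) * ?g V" by simp
    also have "\<dots> \<le> 2 ^ (2 ^ M) * ?g V"
    proof (rule mult_right_mono[OF _ gnn])
      have "{F\<in>W. verts F = V} \<subseteq> Pow (Pow V)" unfolding verts_def by blast
      hence "card {F\<in>W. verts F = V} \<le> card (Pow (Pow V))" using finV by (intro card_mono) auto
      also have "\<dots> = 2 ^ (2 ^ card V)" using finV by (simp add: card_Pow)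
      also have "\<dots> \<le> 2 ^ (2 ^ M)" using cV by (intro power_increasing) auto
      finally have "card {F\<in>W. verts F = V} \<le> (2::nat) ^ (2 ^ M)" .
      hence "real (card {F\<in>W. verts F = V}) \<le> real ((2::nat) ^ (2 ^ M))" by (simp only: of_nat_le_iff)
      thus "real (card {F\<in>W. verts F = V}) \<le> 2 ^ (2 ^ M)" by simp
    qed
    finally show "(\<Sum>F\<in>{F\<in>W. verts F = V}. ?g (verts F)) \<le> 2 ^ (2 ^ M) * ?g V" .
  qed
  have s3: "(\<Sum>V\<in>verts ` W. ?g V) \<le> (\<Sum>V\<in>VV. ?g V)"
  proof (rule sum_mono2[OF finVV])
    show "verts ` W \<subseteq> VV"
    proof
      fix V assume "V \<in> verts ` W"
      then obtain F where F: "F \<in> W" "V = verts F" by blast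
      have "F \<subseteq> all_edges n" using F W by blast
      hence "V \<subseteq> {0..<n}" using F(2) unfolding verts_def all_edges_def by auto
      thus "V \<in> VV" using F W unfolding VV_def by auto
    qed
  qed (rule gnn)
  have s4: "(\<Sum>V\<in>VV. ?g V) \<le> real M + 1"
  proof -
    have "(\<Sum>V\<in>VV. ?g V) = (\<Sum>v\<in>card ` VV. \<Sum>V\<in>{V\<in>VV. card V = v}. ?g V)"
      by (rule sum.image_gen[OF finVV])
    also have "\<dots> \<le> (\<Sum>v\<in>card ` VV. 1)"
    proof (rule sum_mono)
      fix v assume v: "v \<in> card ` VV"
      have "(\<Sum>V\<in>{V\<in>VV. card V = v}. ?g V) = (\<Sum>V\<in>{V\<in>VV. card V = v}. inverse (real n ^ v))"
        by (rule sum.cong) auto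
      also have "\<dots> = real (card {V\<in>VV. card V = v}) * inverse (real n ^ v)" by simp
      also have "\<dots> \<le> real n ^ v * inverse (real n ^ v)"
      proof (rule mult_right_mono)
        have "{V\<in>VV. card V = v} \<subseteq> {V. V \<subseteq> {0..<n} \<and> card V = v}" unfolding VV_def by blast
        hence "card {V\<in>VV. card V = v} \<le> card {V. V \<subseteq> {0..<n} \<and> card V = v}"
          by (intro card_mono) (auto intro: finite_subset[of _ "Pow {0..<n}"])
        also have "\<dots> = n choose v" using n_subsets[of "{0..<n}" v] by simp
        also have "\<dots> \<le> n ^ v"
        proof (cases "v \<le> n")
          case True thus ?thesis by (rule binomial_le_pow)
        next
          case False thus ?thesis by (simp add: binomial_eq_0)
        qed
        finally have "card {V\<in>VV. card V = v} \<le> n ^ v" .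
        hence "real (card {V\<in>VV. card V = v}) \<le> real (n ^ v)" by (simp only: of_nat_le_iff)
        thus "real (card {V\<in>VV. card V = v}) \<le> real n ^ v" by simp
      qed simp
      also have "\<dots> = 1" using n1 by simp
      finally show "(\<Sum>V\<in>{V\<in>VV. card V = v}. ?g V) \<le> 1" .
    qed
    also have "\<dots> = real (card (card ` VV))" by simp
    also have "\<dots> \<le> real (card {..M})"
      by (subst of_nat_le_iff, rule card_mono) (auto simp: VV_def)
    also have "\<dots> = real M + 1" by simp
    finally show ?thesis .
  qed
  have "(\<Sum>F\<in>W. ?g (verts F)) \<le> (\<Sum>V\<in>verts ` W. 2 ^ (2 ^ M) * ?g V)" using s1 s2 by simp
  also have "\<dots> = 2 ^ (2 ^ M) * (\<Sum>V\<in>verts ` W. ?g V)" by (simp add: sum_distrib_left)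
  also have "\<dots> \<le> 2 ^ (2 ^ M) * (real M + 1)" using s3 s4 by (intro mult_left_mono) auto
  finally show ?thesis .
qed


lemma main_bound:
  assumes n1: "n \<ge> 1" and eps: "(\<epsilon>::real) > 0"
  defines "M \<equiv> 2 * (nat \<lceil>1/\<epsilon>\<rceil> * nat \<lceil>2/\<epsilon>\<rceil> + nat \<lceil>2/\<epsilon>\<rceil> + 6)"
  shows "gnp_prob n (real n powr (-(2/5 + \<epsilon>))) bad_chain \<le> 2 ^ (2 ^ M) * (real M + 1) * real n powr (-1/5)"
proof -
  define p where "p = real n powr (-(2/5 + \<epsilon>))"
  have n0: "real n > 0" "real n \<ge> 1" using n1 by auto
  have p0: "0 \<le> p" unfolding p_def by simp
  have "p \<le> real n powr 0" unfolding p_def using n0 eps by (intro powr_mono) auto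
  hence p1: "p \<le> 1" using n0 by simp
  define W where "W = {F \<in> Pow (all_edges n). card (verts F) \<le> M \<and>
      5 * real (card (verts F)) + 1 \<le> (2 + 5 * \<epsilon>) * real (card F)}"
  have WA: "W \<subseteq> Pow (all_edges n)" unfolding W_def by blast
  have imp: "\<forall>E\<in>Pow (all_edges n). bad_chain E \<longrightarrow> (\<exists>F\<in>W. F \<subseteq> E)"
  proof (intro ballI impI)
    fix E assume E: "E \<in> Pow (all_edges n)" "bad_chain E"
    from dense_witness[OF E(2) _ eps] E(1) obtain F where F: "F \<subseteq> E"
      "card (verts F) \<le> M" "5 * real (card (verts F)) + 1 \<le> (2 + 5 * \<epsilon>) * real (card F)"
      unfolding M_def by blast
    have "F \<in> W" unfolding W_def using F E(1) by auto
    thus "\<exists>F\<in>W. F \<subseteq> E" using F(1) by blast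
  qed
  have "gnp_prob n p bad_chain \<le> (\<Sum>F\<in>W. gnp_prob n p (\<lambda>E. F \<subseteq> E))"
    by (rule gnp_union[OF p0 p1 WA imp])
  also have "\<dots> = (\<Sum>F\<in>W. p ^ card F)"
    by (rule sum.cong[OF refl], rule gnp_sub) (use WA in blast)
  also have "\<dots> \<le> (\<Sum>F\<in>W. real n powr (-1/5) * inverse (real n ^ card (verts F)))"
  proof (rule sum_mono)
    fix F assume F: "F \<in> W"
    have dens: "5 * real (card (verts F)) + 1 \<le> (2 + 5 * \<epsilon>) * real (card F)" using F unfolding W_def by blast
    have "p ^ card F = real n powr (real (card F) * (-(2/5 + \<epsilon>)))"
      unfolding p_def using n0 by (simp add: powr_power)
    also have "\<dots> \<le> real n powr (-1/5 + - real (card (verts F)))"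
      using dens n0 by (intro powr_mono) (auto simp: algebra_simps)
    also have "\<dots> = real n powr (-1/5) * real n powr (- real (card (verts F)))"
      by (rule powr_add)
    also have "real n powr (- real (card (verts F))) = inverse (real n ^ card (verts F))"
      using n0 by (simp add: powr_minus powr_realpow)
    finally show "p ^ card F \<le> real n powr (-1/5) * inverse (real n ^ card (verts F))" .
  qed
  also have "\<dots> = real n powr (-1/5) * (\<Sum>F\<in>W. inverse (real n ^ card (verts F)))"
    by (simp add: sum_distrib_left)
  also have "\<dots> \<le> real n powr (-1/5) * (2 ^ (2 ^ M) * (real M + 1))"
    by (intro mult_left_mono count_bound[OF n1]) (auto simp: W_def)
  finally show ?thesis unfolding p_def by (simp add: mult.commute)
qed

theorem claim7p9:
  shows "\<exists>\<epsilon>0>0. \<forall>\<epsilon>::real. 0 < \<epsilon> \<and> \<epsilon> < \<epsilon>0 \<longrightarrow>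
     (\<lambda>n. gnp_prob n (real n powr (-(2/5 + \<epsilon>))) bad_chain) \<longlonglongrightarrow> 0"
proof (intro exI[of _ "1::real"] conjI allI impI)
  fix \<epsilon> :: real assume "0 < \<epsilon> \<and> \<epsilon> < 1"
  hence eps: "\<epsilon> > 0" by simp
  define M where "M = 2 * (nat \<lceil>1/\<epsilon>\<rceil> * nat \<lceil>2/\<epsilon>\<rceil> + nat \<lceil>2/\<epsilon>\<rceil> + 6)"
  define C :: real where "C = 2 ^ (2 ^ M) * (real M + 1)"
  have lim: "(\<lambda>n. real n powr (-1/5)) \<longlonglongrightarrow> 0"
    using tendsto_neg_powr[of "-1/5" real sequentially] filterlim_real_sequentially by simp
  show "(\<lambda>n. gnp_prob n (real n powr (-(2/5 + \<epsilon>))) bad_chain) \<longlonglongrightarrow> 0"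
  proof (rule tendsto_0_le[OF lim, of _ C])
    show "\<forall>\<^sub>F n in sequentially. norm (gnp_prob n (real n powr (-(2/5 + \<epsilon>))) bad_chain)
            \<le> norm (real n powr (-1/5)) * C"
    proof (rule eventually_sequentiallyI[of 1])
      fix n :: nat assume n1: "n \<ge> 1"
      have p0: "0 \<le> real n powr (-(2/5 + \<epsilon>))" by simp
      have "real n powr (-(2/5 + \<epsilon>)) \<le> real n powr 0" using n1 eps by (intro powr_mono) auto
      hence p1: "real n powr (-(2/5 + \<epsilon>)) \<le> 1" using n1 by simp
      have nn: "0 \<le> gnp_prob n (real n powr (-(2/5 + \<epsilon>))) bad_chain" by (rule gnp_nonneg[OF p0 p1])
      have "gnp_prob n (real n powr (-(2/5 + \<epsilon>))) bad_chain \<le> C * real n powr (-1/5)"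
        using main_bound[OF n1 eps] unfolding C_def M_def by simp
      thus "norm (gnp_prob n (real n powr (-(2/5 + \<epsilon>))) bad_chain) \<le> norm (real n powr (-1/5)) * C"
        using nn by (simp add: mult.commute)
    qed
  qed
qed simp


end
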